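(* If $\sigma_A\alpha_i-\sigma_S\mu_S>0$ for every individual $i$, then the system is in the full action state: for every $t_{start}\ge 0$, every individual acts infinitely (countably) many times after $t_{start}$.
   Context: Model: Fix an integer $n\ge 2$ (number of individuals) and parameters $\sigma_A,\sigma_S\ge 0$, $\sigma_C>0$, $\mu_S\in[0,1]$, $\mu_C>0$, $r>0$, $\tau\in(0,1)$, $\alpha_1,\dots,\alpha_n\in(-1,1)$. Individual $i$ has state $(x_i(t),y_i(t))$, $x_i\in(-1,1)$, $y_i\in[0,1]$, and $\gamma_i(t)=\frac{1}{n-1}\sum_{j\neq i}y_j(t)$. Between action events the state evolves by $\dot x_i=[\sigma_A\alpha_i+\sigma_S(\gamma_i-\mu_S)]\,\sigma_C(\gamma_i+\mu_C)(1-x_i)(1+x_i)$, $\dot y_i=-ry_i$. Individual $i$ "acts" at a time $t$ when $x_i(t)$ reaches the threshold $\tau$ (i.e. $x_i(t)\ge\tau$); immediately afterwards $x_i$ is reset to $0$ and $y_i$ is reset to $1$, and the continuous evolution resumes from the new state. Initial data satisfy $x_j(0)<\tau$, $y_j(0)=0$. *)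

theory Defs
  imports "HOL-Analysis.Analysis"
begin

text \<open>Individuals are indexed by 0,...,n-1. The state of individual i at time t is
  (x i t, y i t); at an action time the stored value is the post-reset value.\<close>

definition gamma :: "nat \<Rightarrow> (nat \<Rightarrow> real \<Rightarrow> real) \<Rightarrow> nat \<Rightarrow> real \<Rightarrow> real" where
  "gamma n y i t = (\<Sum>j\<in>{0..<n} - {i}. y j t) / (real n - 1)"

definition xrate ::
  "real \<Rightarrow> real \<Rightarrow> real \<Rightarrow> real \<Rightarrow> real \<Rightarrow> real \<Rightarrow> real \<Rightarrow> real \<Rightarrow> real" where
  "xrate sA sS sC muS muC a g xi =
     (sA * a + sS * (g - muS)) * sC * (g + muC) * (1 - xi) * (1 + xi)"

text \<open>A trajectory of the hybrid system on [0,\<infinity>), with action-time sets acts i: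
  continuous evolution by the ODE (right derivatives, since gamma jumps when others act),
  continuity except at own action times, x below the threshold at all times,
  and at each action time x reaches the threshold from the left and is reset to (0,1).\<close>

definition is_trajectory ::
  "nat \<Rightarrow> real \<Rightarrow> real \<Rightarrow> real \<Rightarrow> real \<Rightarrow> real \<Rightarrow> real \<Rightarrow> real \<Rightarrow> (nat \<Rightarrow> real)
   \<Rightarrow> (nat \<Rightarrow> real \<Rightarrow> real) \<Rightarrow> (nat \<Rightarrow> real \<Rightarrow> real) \<Rightarrow> (nat \<Rightarrow> real set) \<Rightarrow> bool" where
  "is_trajectory n sA sS sC muS muC r tau alpha x y acts \<longleftrightarrow>
    (\<forall>i<n.
       -1 < x i 0 \<and> x i 0 < tau \<and> y i 0 = 0 \<and>
       acts i \<subseteq> {0<..} \<and>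
       (\<forall>t\<ge>0. x i t < tau) \<and>
       (\<forall>t\<ge>0. (x i has_real_derivative
                 xrate sA sS sC muS muC (alpha i) (gamma n y i t) (x i t)) (at t within {t..})) \<and>
       (\<forall>t\<ge>0. (y i has_real_derivative (- r * y i t)) (at t within {t..})) \<and>
       (\<forall>t>0. t \<notin> acts i \<longrightarrow> isCont (x i) t \<and> isCont (y i) t) \<and>
       (\<forall>t\<in>acts i. (x i \<longlongrightarrow> tau) (at_left t) \<and> x i t = 0 \<and> y i t = 1))"

end

theory Submission imports Defs begin

lemma right_deriv_mono:
  fixes f D :: "real \<Rightarrow> real"
  assumes ab: "a \<le> b" and fc: "continuous_on {a..b} f"
    and fd: "\<And>t. a \<le> t \<Longrightarrow> t < b \<Longrightarrow> (f has_real_derivative D t) (at t within {t..})"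
    and Dp: "\<And>t. a \<le> t \<Longrightarrow> t < b \<Longrightarrow> D t \<ge> 0"
  shows "f a \<le> f b"
proof -
  have key: "f a - e*(b - a) \<le> f b" if e: "e > 0" for e
  proof -
    define g where "g t = f t + e * t" for t
    have gc: "continuous_on {a..b} g" unfolding g_def
      by (intro continuous_intros fc)
    have gd: "(g has_real_derivative (D t + e)) (at t within {t..})" if "a \<le> t" "t < b" for t
      unfolding g_def using fd[OF that] by (auto intro!: derivative_eq_intros)
    show ?thesis
    proof (rule ccontr)
      assume "\<not> ?thesis"
      then have gba: "g b < g a" unfolding g_def by (simp add: algebra_simps)
      let ?K = "{t \<in> {a..b}. (\<lambda>_. g a) t \<le> g t}"
      have "closed ?K"
        by (rule continuous_on_closed_Collect_le) (auto intro: gc continuous_intros)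
      moreover have "bounded ?K" by (rule bounded_subset[of "{a..b}"]) auto
      ultimately have "compact ?K" using compact_eq_bounded_closed by blast
      moreover have "a \<in> ?K" using ab by auto
      ultimately obtain m where mK: "m \<in> ?K" and mmax: "\<forall>t\<in>?K. t \<le> m"
        using compact_attains_sup by blast
      have mb: "m < b" using mK gba by (cases "m = b") auto
      have "D m + e > 0" using Dp[of m] mK mb e by auto
      from has_real_derivative_pos_inc_right[OF gd[of m] this] mK mb
      obtain d where d: "d > 0" "\<forall>h>0. m + h \<in> {m..} \<longrightarrow> h < d \<longrightarrow> g m < g (m + h)"
        by auto
      define h where "h = min (d/2) (b - m)"
      have h: "h > 0" "h < d" "m + h \<le> b" using d mb by (auto simp: h_def)
      have "g m < g (m + h)" using d h by auto
      then have "m + h \<in> ?K" using mK h by auto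
      then show False using mmax h by auto
    qed
  qed
  show ?thesis
  proof (rule ccontr)
    assume "\<not> ?thesis"
    then have lt: "f b < f a" by simp
    then have "a < b" using ab by (cases "a = b") auto
    define e where "e = (f a - f b) / (2 * (b - a))"
    have "e > 0" using lt \<open>a < b\<close> by (simp add: e_def)
    have eq: "e * (b - a) = (f a - f b) / 2" using \<open>a < b\<close> by (simp add: e_def field_simps)
    have "f a - (f a - f b) / 2 \<le> f b" using key[OF \<open>e > 0\<close>] unfolding eq .
    then show False using lt by (simp add: field_simps)
  qed
qed

lemma last_reset:
  fixes z :: "real \<Rightarrow> real" and A :: "real set"
  assumes A: "A \<subseteq> {0<..}" and t1: "t1 \<ge> 0" and zA: "\<forall>a\<in>A. z a = v"
    and zc: "\<forall>t>0. t \<notin> A \<longrightarrow> isCont z t"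
  shows "\<exists>s. 0 \<le> s \<and> s \<le> t1 \<and> (\<forall>t. s < t \<and> t \<le> t1 \<longrightarrow> t \<notin> A) \<and> (z s = z 0 \<or> z s = v)"
proof -
  define R where "R = insert 0 (A \<inter> {..t1})"
  define s where "s = Sup R"
  have Rne: "R \<noteq> {}" and Rbdd: "bdd_above R" using t1 by (auto simp: R_def bdd_above_def)
  have s0: "0 \<le> s" unfolding s_def by (rule cSup_upper) (auto simp: R_def Rbdd)
  have st1: "s \<le> t1" unfolding s_def by (rule cSup_least) (use t1 Rne in \<open>auto simp: R_def\<close>)
  have noA: "\<forall>t. s < t \<and> t \<le> t1 \<longrightarrow> t \<notin> A"
  proof (intro allI impI)
    fix t assume "s < t \<and> t \<le> t1"
    moreover have "t \<in> A \<Longrightarrow> t \<le> s" unfolding s_def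
      using calculation by (intro cSup_upper Rbdd) (auto simp: R_def)
    ultimately show "t \<notin> A" by auto
  qed
  have val: "z s = z 0 \<or> z s = v"
  proof (cases "s \<in> R")
    case True then show ?thesis using zA by (auto simp: R_def)
  next
    case False
    then have spos: "s > 0" and sA: "s \<notin> A" using s0 st1 by (auto simp: R_def)
    have ic: "isCont z s" using zc spos sA by auto
    show ?thesis
    proof (rule ccontr)
      assume "\<not> ?thesis"
      then have ep: "dist (z s) v > 0" by auto
      obtain d where d: "d > 0" "\<forall>x'. dist x' s < d \<longrightarrow> dist (z x') (z s) < dist (z s) v"
        using ic ep unfolding continuous_at_eps_delta by blast
      have "max (s - d) 0 < s" using d spos by auto
      then obtain q where q: "q \<in> R" "max (s - d) 0 < q" unfolding s_def
        using less_cSup_iff[OF Rne Rbdd] by blast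
      have "q \<le> s" unfolding s_def using q Rbdd by (auto intro: cSup_upper)
      with q False have "q < s" unfolding s_def by (cases "q = Sup R") auto
      have "q \<in> A" using q by (auto simp: R_def)
      then have "z q = v" using zA by auto
      moreover have "dist q s < d" using q \<open>q < s\<close> by (auto simp: dist_real_def)
      ultimately show False using d by (auto simp: dist_commute)
    qed
  qed
  show ?thesis using s0 st1 noA val by blast
qed

lemma cont_interval:
  fixes z :: "real \<Rightarrow> real"
  assumes "(z has_real_derivative D) (at s within {s..})" "\<forall>t. s < t \<and> t \<le> b \<longrightarrow> isCont z t"
  shows "continuous_on {s..b} z"
  unfolding continuous_on_eq_continuous_within
proof
  fix t assume t: "t \<in> {s..b}"
  show "continuous (at t within {s..b}) z"
  proof (cases "t = s")
    case True
    have "continuous (at s within {s..}) z" using DERIV_continuous[OF assms(1)] .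
    then have "continuous (at s within {s..b}) z" by (rule continuous_within_subset) auto
    then show ?thesis using True by simp
  next
    case False
    then show ?thesis using t assms(2) by (auto intro: continuous_at_imp_continuous_within)
  qed
qed

lemma rate_lb:
  fixes sA sS sC muS muC a g xi x0 tau :: real
  assumes "sS \<ge> 0" "sC > 0" "muC > 0" "g \<ge> 0" "sA*a - sS*muS > 0" "x0 \<le> xi" "xi \<le> tau" "tau < 1" "-1 < x0"
  shows "xrate sA sS sC muS muC a g xi \<ge> (sA*a - sS*muS) * sC * muC * (1 - tau) * (1 + x0)"
    and "(sA*a - sS*muS) * sC * muC * (1 - tau) * (1 + x0) > 0"
proof -
  have A: "sA*a - sS*muS \<le> sA * a + sS * (g - muS)" using assms by (simp add: algebra_simps)
  have G: "muC \<le> g + muC" using assms by simp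
  have Ap: "0 \<le> sA*a - sS*muS" and Ap2: "0 \<le> sA * a + sS * (g - muS)" using A assms by linarith+
  have 1: "(sA*a - sS*muS) * sC \<le> (sA * a + sS * (g - muS)) * sC"
    using A assms by (intro mult_right_mono) auto
  have 2: "(sA*a - sS*muS) * sC * muC \<le> (sA * a + sS * (g - muS)) * sC * (g + muC)"
    by (rule mult_mono[OF 1 G]) (use Ap2 assms in auto)
  have 3: "(sA*a - sS*muS) * sC * muC * (1 - tau) \<le> (sA * a + sS * (g - muS)) * sC * (g + muC) * (1 - xi)"
    by (rule mult_mono[OF 2]) (use Ap2 assms in auto)
  have 4: "(sA*a - sS*muS) * sC * muC * (1 - tau) * (1 + x0) \<le> (sA * a + sS * (g - muS)) * sC * (g + muC) * (1 - xi) * (1 + xi)"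
    by (rule mult_mono[OF 3]) (use Ap2 assms in auto)
  then show "xrate sA sS sC muS muC a g xi \<ge> (sA*a - sS*muS) * sC * muC * (1 - tau) * (1 + x0)"
    by (simp add: xrate_def)
  show "(sA*a - sS*muS) * sC * muC * (1 - tau) * (1 + x0) > 0" using assms by simp
qed

theorem proposition5:
  fixes n :: nat and sA sS sC muS muC r tau :: real
    and alpha :: "nat \<Rightarrow> real"
    and x y :: "nat \<Rightarrow> real \<Rightarrow> real" and acts :: "nat \<Rightarrow> real set"
  assumes "n \<ge> 2" and "sA \<ge> 0" and "sS \<ge> 0" and "sC > 0"
    and "0 \<le> muS" and "muS \<le> 1" and "muC > 0" and "r > 0"
    and "0 < tau" and "tau < 1"
    and "\<forall>i<n. -1 < alpha i \<and> alpha i < 1"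
    and "is_trajectory n sA sS sC muS muC r tau alpha x y acts"
    and "\<forall>i<n. sA * alpha i - sS * muS > 0"
  shows "\<forall>tstart\<ge>0. \<forall>i<n. infinite {t \<in> acts i. t > tstart}"
proof -
  note T = assms(12)[unfolded is_trajectory_def]
  have x0: "\<And>i. i < n \<Longrightarrow> -1 < x i 0" using T by blast
  have y0: "\<And>i. i < n \<Longrightarrow> y i 0 = 0" using T by blast
  have actsp: "\<And>i. i < n \<Longrightarrow> acts i \<subseteq> {0<..}" using T by blast
  have xlt: "\<And>i t. i < n \<Longrightarrow> t \<ge> 0 \<Longrightarrow> x i t < tau" using T by blast
  have xd: "\<And>i t. i < n \<Longrightarrow> t \<ge> 0 \<Longrightarrow> (x i has_real_derivative
                 xrate sA sS sC muS muC (alpha i) (gamma n y i t) (x i t)) (at t within {t..})"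
    using T by blast
  have yd: "\<And>i t. i < n \<Longrightarrow> t \<ge> 0 \<Longrightarrow> (y i has_real_derivative (- r * y i t)) (at t within {t..})"
    using T by blast
  have xc: "\<And>i. i < n \<Longrightarrow> \<forall>t>0. t \<notin> acts i \<longrightarrow> isCont (x i) t" using T by blast
  have yc: "\<And>i. i < n \<Longrightarrow> \<forall>t>0. t \<notin> acts i \<longrightarrow> isCont (y i) t" using T by blast
  have xa: "\<And>i. i < n \<Longrightarrow> \<forall>a\<in>acts i. x i a = 0" using T by blast
  have ya: "\<And>i. i < n \<Longrightarrow> \<forall>a\<in>acts i. y i a = 1" using T by blast
  have ynn: "y j t1 \<ge> 0" if j: "j < n" and t1: "t1 \<ge> 0" for j t1
  proof -
    obtain s where s: "0 \<le> s" "s \<le> t1" "\<forall>t. s < t \<and> t \<le> t1 \<longrightarrow> t \<notin> acts j"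
      "y j s = y j 0 \<or> y j s = 1"
      using last_reset[OF actsp[OF j] t1 ya[OF j] yc[OF j]] by blast
    have ys: "y j s \<ge> 0" using s(4) y0[OF j] by auto
    have yco: "continuous_on {s..t1} (y j)"
      by (rule cont_interval[OF yd[OF j s(1)]]) (use s yc[OF j] in auto)
    define h where "h t = exp (r * t) * y j t" for t
    have hc: "continuous_on {s..t1} h" unfolding h_def by (intro continuous_intros yco)
    have hd: "(h has_real_derivative 0) (at t within {t..})" if "s \<le> t" "t < t1" for t
      unfolding h_def using that s(1)
      by (auto intro!: derivative_eq_intros yd[OF j] simp: algebra_simps)
    have "h s \<le> h t1" by (rule right_deriv_mono[OF s(2) hc hd]) auto
    moreover have "h s \<ge> 0" unfolding h_def using ys by simp
    ultimately have "exp (r * t1) * y j t1 \<ge> 0" unfolding h_def by simp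
    then show ?thesis by (simp add: zero_le_mult_iff)
  qed
  have gnn: "gamma n y i t \<ge> 0" if "t \<ge> 0" for i t
    unfolding gamma_def using assms(1) that
    by (intro divide_nonneg_nonneg sum_nonneg) (auto intro: ynn)
  have rate_nn: "xrate sA sS sC muS muC (alpha i) (gamma n y i t) (x i t) \<ge> 0"
    if i: "i < n" and t: "t \<ge> 0" and xt: "x i t > -1" for i t
  proof -
    have "xrate sA sS sC muS muC (alpha i) (gamma n y i t) (x i t) \<ge>
      (sA * alpha i - sS*muS) * sC * muC * (1 - tau) * (1 + x i t)"
     and "(sA * alpha i - sS*muS) * sC * muC * (1 - tau) * (1 + x i t) > 0"
      using rate_lb[of sS sC muC "gamma n y i t" sA "alpha i" muS "x i t" "x i t" tau]
        assms gnn[OF t] xlt[OF i t] xt i by auto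
    then show ?thesis by linarith
  qed
  have xgt: "x i t1 > -1" if i: "i < n" and t1: "t1 \<ge> 0" for i t1
  proof -
    obtain s where s: "0 \<le> s" "s \<le> t1" "\<forall>t. s < t \<and> t \<le> t1 \<longrightarrow> t \<notin> acts i"
      "x i s = x i 0 \<or> x i s = 0"
      using last_reset[OF actsp[OF i] t1 xa[OF i] xc[OF i]] by blast
    have xs: "x i s > -1" using s(4) x0[OF i] by auto
    have xco: "continuous_on {s..t1} (x i)"
      by (rule cont_interval[OF xd[OF i s(1)]]) (use s xc[OF i] in auto)
    show ?thesis
    proof (rule ccontr)
      assume neg: "\<not> ?thesis"
      let ?K = "{t \<in> {s..t1}. x i t \<le> (\<lambda>_. -1) t}"
      have "closed ?K"
        by (rule continuous_on_closed_Collect_le) (auto intro: xco continuous_intros)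
      moreover have "bounded ?K" by (rule bounded_subset[of "{s..t1}"]) auto
      ultimately have "compact ?K" using compact_eq_bounded_closed by blast
      moreover have "t1 \<in> ?K" using s neg by auto
      ultimately obtain w where wK: "w \<in> ?K" and wmin: "\<forall>t\<in>?K. w \<le> t"
        using compact_attains_inf by blast
      have sw: "s \<le> w" using wK by auto
      have "x i s \<le> x i w"
      proof (rule right_deriv_mono[OF sw])
        show "continuous_on {s..w} (x i)" by (rule continuous_on_subset[OF xco]) (use wK in auto)
        fix t assume "s \<le> t" "t < w"
        then have tt: "t \<ge> 0" "x i t > -1" using wmin wK s by force+
        show "(x i has_real_derivative
                 xrate sA sS sC muS muC (alpha i) (gamma n y i t) (x i t)) (at t within {t..})"
          using xd[OF i tt(1)] .
        show "xrate sA sS sC muS muC (alpha i) (gamma n y i t) (x i t) \<ge> 0"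
          using rate_nn[OF i tt] .
      qed
      then show False using wK xs by auto
    qed
  qed
  show ?thesis
  proof (intro allI impI)
    fix tstart :: real and i assume ts: "tstart \<ge> 0" and i: "i < n"
    show "infinite {t \<in> acts i. t > tstart}"
    proof
      assume fin: "finite {t \<in> acts i. t > tstart}"
      define F where "F = {t \<in> acts i. t > tstart}"
      define s0 where "s0 = (if F = {} then tstart else Max F)"
      have s0t: "tstart \<le> s0"
      proof (cases "F = {}")
        case False
        then obtain q where q: "q \<in> F" by blast
        then have "q \<le> Max F" using fin by (simp add: F_def)
        then show ?thesis using q False by (simp add: s0_def F_def)
      qed (simp add: s0_def)
      have s0p: "s0 \<ge> 0" using s0t ts by auto
      have noA: "t \<notin> acts i" if "t > s0" for t
      proof
        assume "t \<in> acts i"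
        then have "t \<in> F" using that s0t by (auto simp: F_def)
        then have "t \<le> Max F" using fin by (auto simp: F_def)
        then show False using that \<open>t \<in> F\<close> by (auto simp: s0_def split: if_splits)
      qed
      have xco: "continuous_on {s0..b} (x i)" for b
        by (rule cont_interval[OF xd[OF i s0p]]) (use s0p noA xc[OF i] in auto)
      have mono: "x i s0 \<le> x i b" if "s0 \<le> b" for b
      proof (rule right_deriv_mono[OF that xco])
        fix t assume "s0 \<le> t" "t < b"
        then have tt: "t \<ge> 0" using s0p by auto
        show "(x i has_real_derivative
                 xrate sA sS sC muS muC (alpha i) (gamma n y i t) (x i t)) (at t within {t..})"
          using xd[OF i tt] .
        show "xrate sA sS sC muS muC (alpha i) (gamma n y i t) (x i t) \<ge> 0"
          using rate_nn[OF i tt xgt[OF i tt]] .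
      qed
      define x0 where "x0 = x i s0"
      define c where "c = (sA * alpha i - sS*muS) * sC * muC * (1 - tau) * (1 + x0)"
      have cp: "c > 0" and rc: "xrate sA sS sC muS muC (alpha i) (gamma n y i t) (x i t) \<ge> c"
        if "s0 \<le> t" for t
        using rate_lb[of sS sC muC "gamma n y i t" sA "alpha i" muS x0 "x i t" tau]
          assms gnn[of t] xlt[OF i, of t] xgt[OF i s0p] mono[OF that] i that s0p
        unfolding c_def x0_def by auto
      have cpos: "c > 0" using cp[of s0] by simp
      define b where "b = s0 + (tau - x0) / c + 1"
      have sb: "s0 \<le> b" using xlt[OF i s0p] cpos by (simp add: b_def x0_def)
      have "x i s0 - c * s0 \<le> x i b - c * b"
      proof (rule right_deriv_mono[OF sb])
        show "continuous_on {s0..b} (\<lambda>t. x i t - c * t)" by (intro continuous_intros xco)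
        fix t assume t: "s0 \<le> t" "t < b"
        then have tt: "t \<ge> 0" using s0p by auto
        show "((\<lambda>t. x i t - c * t) has_real_derivative
                 xrate sA sS sC muS muC (alpha i) (gamma n y i t) (x i t) - c * 1) (at t within {t..})"
          by (intro derivative_intros xd[OF i tt] DERIV_cmult DERIV_ident)
        show "xrate sA sS sC muS muC (alpha i) (gamma n y i t) (x i t) - c * 1 \<ge> 0"
          using rc[OF t(1)] by simp
      qed
      then have "x i b \<ge> x0 + c * (b - s0)" by (simp add: x0_def algebra_simps)
      moreover have "c * (b - s0) = tau - x0 + c" using cpos by (simp add: b_def field_simps)
      ultimately have "x i b > tau" using cpos by linarith
      moreover have "x i b < tau" using xlt[OF i, of b] sb s0p by linarith
      ultimately show False by linarith
    qed
  qed
qed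

end
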